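(* Let $\nu\in\mathcal{P}_2(\mathbb{R}^2)$, let $\gamma$ be an optimal plan (a minimizer of $\int c\,d\gamma$ over $\Gamma(\nu)$) and $\mu$ its $x$-marginal. Then $\gamma$ minimizes $\int c(x,y)\,d\pi$ over $\pi\in\Pi(\mu,\nu)$.
   Context: $c(x,y)=(x_1-y_1)(x_2-y_2)$ for $x,y\in\mathbb{R}^2$. $\mathcal{P}_2(\mathbb{R}^d)$: Borel probability measures with finite second moment. $\Gamma(\nu)$: the set of $\gamma\in\mathcal{P}_2(\mathbb{R}^2\times\mathbb{R}^2)$ (points $(x,y)$) with $y$-marginal $\nu$ and $\gamma(y|x)=x$ (conditional expectation of $y$ given $x$ equals $x$, $\gamma$-a.s.). $\Pi(\mu,\nu)$ is the set of Borel probability measures on $\mathbb{R}^2\times\mathbb{R}^2$ with $x$-marginal $\mu$ and $y$-marginal $\nu$. *)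

theory Defs
  imports "HOL-Probability.Probability"
begin

type_synonym pt = "real \<times> real"

definition cost :: "pt \<Rightarrow> pt \<Rightarrow> real" where
  "cost x y = (fst x - fst y) * (snd x - snd y)"

definition P2 :: "('a::euclidean_space) measure set" where
  "P2 = {M. prob_space M \<and> sets M = sets borel \<and> integrable M (\<lambda>z. (norm z)^2)}"

definition Couplings :: "pt measure \<Rightarrow> pt measure \<Rightarrow> (pt \<times> pt) measure set" where
  "Couplings \<mu> \<nu> = {\<pi>. prob_space \<pi> \<and> sets \<pi> = sets borel \<and>
      distr \<pi> borel fst = \<mu> \<and> distr \<pi> borel snd = \<nu>}"

definition Gamma_mart :: "pt measure \<Rightarrow> (pt \<times> pt) measure set" where
  "Gamma_mart \<nu> = {\<gamma>. \<gamma> \<in> P2 \<and> distr \<gamma> borel snd = \<nu> \<and>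
      (AE p in \<gamma>. real_cond_exp \<gamma> (vimage_algebra (space \<gamma>) fst borel) (\<lambda>q. fst (snd q)) p = fst (fst p)) \<and>
      (AE p in \<gamma>. real_cond_exp \<gamma> (vimage_algebra (space \<gamma>) fst borel) (\<lambda>q. snd (snd q)) p = snd (fst p))}"

definition total_cost :: "(pt \<times> pt) measure \<Rightarrow> real" where
  "total_cost \<pi> = (\<integral>p. cost (fst p) (snd p) \<partial>\<pi>)"

end

theory Submission
  imports Defs
begin

definition mix :: "real \<Rightarrow> 'a measure \<Rightarrow> 'a measure \<Rightarrow> 'a measure" where
  "mix t A B = measure_pmf (bernoulli_pmf t) \<bind> (\<lambda>b. if b then B else A)"

lemma mix_kernel:
  assumes "prob_space A" "prob_space B" "sets B = sets A"
  shows "(\<lambda>b. if b then B else A) \<in> measurable (measure_pmf (bernoulli_pmf t)) (subprob_algebra A)"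
proof -
  have "(\<lambda>b. if b then B else A) \<in> measurable (count_space UNIV) (subprob_algebra A)"
    using assms by (auto simp: space_subprob_algebra prob_space_imp_subprob_space)
  then show ?thesis by (simp add: measurable_cong_sets)
qed

lemma mix_sets:
  assumes "prob_space A" "prob_space B" "sets B = sets A"
  shows "sets (mix t A B) = sets A"
  unfolding mix_def
  by (rule sets_bind[where N=A]) (use assms in auto)

lemma mix_prob:
  assumes "prob_space A" "prob_space B" "sets B = sets A"
  shows "prob_space (mix t A B)"
  unfolding mix_def
  by (rule prob_space.prob_space_bind[OF prob_space_measure_pmf _ mix_kernel[OF assms]])
     (use assms in auto)

lemma mix_nn:
  assumes "prob_space A" "prob_space B" "sets B = sets A" "0 \<le> t" "t \<le> 1"
    and f: "f \<in> borel_measurable A"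
  shows "(\<integral>\<^sup>+x. f x \<partial>mix t A B) = ennreal t * (\<integral>\<^sup>+x. f x \<partial>B) + ennreal (1 - t) * (\<integral>\<^sup>+x. f x \<partial>A)"
  unfolding mix_def
  apply (subst nn_integral_bind[OF f mix_kernel[OF assms(1-3)]])
  using assms by (simp add: mult.commute)

lemma mix_integral_nonneg:
  fixes g :: "'a \<Rightarrow> real"
  assumes "prob_space A" "prob_space B" "sets B = sets A" "0 \<le> t" "t \<le> 1"
    and "integrable A g" "integrable B g" "\<And>x. 0 \<le> g x"
  shows "has_bochner_integral (mix t A B) g (t * integral\<^sup>L B g + (1 - t) * integral\<^sup>L A g)"
proof (rule has_bochner_integral_nn_integral)
  have gm: "g \<in> borel_measurable A" using assms by auto
  then show "g \<in> borel_measurable (mix t A B)"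
    by (subst measurable_cong_sets[OF mix_sets[OF assms(1-3)] refl]) (rule gm)
  show "AE x in mix t A B. 0 \<le> g x" using assms by simp
  show "0 \<le> t * integral\<^sup>L B g + (1 - t) * integral\<^sup>L A g"
    using assms by (simp add: integral_nonneg)
  have "(\<integral>\<^sup>+x. ennreal (g x) \<partial>mix t A B) = ennreal t * (\<integral>\<^sup>+x. ennreal (g x) \<partial>B) + ennreal (1 - t) * (\<integral>\<^sup>+x. ennreal (g x) \<partial>A)"
    by (rule mix_nn) (use assms gm in auto)
  also have "\<dots> = ennreal t * ennreal (integral\<^sup>L B g) + ennreal (1 - t) * ennreal (integral\<^sup>L A g)"
    using assms by (simp add: nn_integral_eq_integral)
  also have "\<dots> = ennreal (t * integral\<^sup>L B g + (1 - t) * integral\<^sup>L A g)"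
    using assms by (simp add: ennreal_mult ennreal_plus integral_nonneg)
  finally show "(\<integral>\<^sup>+x. ennreal (g x) \<partial>mix t A B) = ennreal (t * integral\<^sup>L B g + (1 - t) * integral\<^sup>L A g)" .
qed

lemma mix_integral:
  fixes f :: "'a \<Rightarrow> real"
  assumes "prob_space A" "prob_space B" "sets B = sets A" "0 \<le> t" "t \<le> 1"
    and "integrable A f" "integrable B f"
  shows "integrable (mix t A B) f" "integral\<^sup>L (mix t A B) f = t * integral\<^sup>L B f + (1 - t) * integral\<^sup>L A f"
proof -
  have p: "has_bochner_integral (mix t A B) (\<lambda>x. max (f x) 0) (t * integral\<^sup>L B (\<lambda>x. max (f x) 0) + (1 - t) * integral\<^sup>L A (\<lambda>x. max (f x) 0))"
    by (rule mix_integral_nonneg) (use assms in auto)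
  have m: "has_bochner_integral (mix t A B) (\<lambda>x. max (- f x) 0) (t * integral\<^sup>L B (\<lambda>x. max (- f x) 0) + (1 - t) * integral\<^sup>L A (\<lambda>x. max (- f x) 0))"
    by (rule mix_integral_nonneg) (use assms in auto)
  have e: "\<And>x. f x = max (f x) 0 - max (- f x) 0" by auto
  have "has_bochner_integral (mix t A B) (\<lambda>x. max (f x) 0 - max (- f x) 0)
     ((t * integral\<^sup>L B (\<lambda>x. max (f x) 0) + (1 - t) * integral\<^sup>L A (\<lambda>x. max (f x) 0)) -
      (t * integral\<^sup>L B (\<lambda>x. max (- f x) 0) + (1 - t) * integral\<^sup>L A (\<lambda>x. max (- f x) 0)))"
    by (rule has_bochner_integral_diff[OF p m])
  moreover have "integral\<^sup>L B f = integral\<^sup>L B (\<lambda>x. max (f x) 0) - integral\<^sup>L B (\<lambda>x. max (- f x) 0)"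
  proof -
    have "integral\<^sup>L B (\<lambda>x. max (f x) 0 - max (- f x) 0) = integral\<^sup>L B (\<lambda>x. max (f x) 0) - integral\<^sup>L B (\<lambda>x. max (- f x) 0)"
      by (rule Bochner_Integration.integral_diff) (use assms in auto)
    moreover have "(\<lambda>x. max (f x) 0 - max (- f x) 0) = f" by (rule ext) auto
    ultimately show ?thesis by simp
  qed
  moreover have "integral\<^sup>L A f = integral\<^sup>L A (\<lambda>x. max (f x) 0) - integral\<^sup>L A (\<lambda>x. max (- f x) 0)"
  proof -
    have "integral\<^sup>L A (\<lambda>x. max (f x) 0 - max (- f x) 0) = integral\<^sup>L A (\<lambda>x. max (f x) 0) - integral\<^sup>L A (\<lambda>x. max (- f x) 0)"
      by (rule Bochner_Integration.integral_diff) (use assms in auto)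
    moreover have "(\<lambda>x. max (f x) 0 - max (- f x) 0) = f" by (rule ext) auto
    ultimately show ?thesis by simp
  qed
  moreover have "(t * integral\<^sup>L B (\<lambda>x. max (f x) 0) + (1 - t) * integral\<^sup>L A (\<lambda>x. max (f x) 0)) -
      (t * integral\<^sup>L B (\<lambda>x. max (- f x) 0) + (1 - t) * integral\<^sup>L A (\<lambda>x. max (- f x) 0))
     = t * (integral\<^sup>L B (\<lambda>x. max (f x) 0) - integral\<^sup>L B (\<lambda>x. max (- f x) 0)) + (1 - t) * (integral\<^sup>L A (\<lambda>x. max (f x) 0) - integral\<^sup>L A (\<lambda>x. max (- f x) 0))"
    by (simp add: algebra_simps)
  ultimately have "has_bochner_integral (mix t A B) (\<lambda>x. max (f x) 0 - max (- f x) 0) (t * integral\<^sup>L B f + (1 - t) * integral\<^sup>L A f)"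
    by metis
  then have "has_bochner_integral (mix t A B) f (t * integral\<^sup>L B f + (1 - t) * integral\<^sup>L A f)"
    using e by (metis (no_types, lifting) ext)
  then show "integrable (mix t A B) f" "integral\<^sup>L (mix t A B) f = t * integral\<^sup>L B f + (1 - t) * integral\<^sup>L A f"
    using integrable.intros has_bochner_integral_integral_eq by blast+
qed

lemma bm:
  assumes "sets M = sets borel" "f \<in> measurable borel N"
  shows "f \<in> measurable M N"
  by (subst measurable_cong_sets[OF assms(1) refl]) (rule assms(2))

lemma meas_fst_pp: "fst \<in> measurable (borel :: ('a::second_countable_topology \<times> 'b::second_countable_topology) measure) borel"
  using measurable_fst[of "borel :: 'a measure" "borel :: 'b measure"] by (simp add: borel_prod)

lemma meas_snd_pp: "snd \<in> measurable (borel :: ('a::second_countable_topology \<times> 'b::second_countable_topology) measure) borel"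
  using measurable_snd[of "borel :: 'a measure" "borel :: 'b measure"] by (simp add: borel_prod)

declare meas_fst_pp[measurable] meas_snd_pp[measurable]

lemma subalg_fst:
  fixes M :: "(pt \<times> pt) measure"
  assumes "prob_space M" "sets M = sets borel"
  shows "sigma_finite_subalgebra M (vimage_algebra (space M) fst borel)"
proof (rule finite_measure_subalgebra_is_sigma_finite)
  have fm: "fst \<in> measurable M borel" by (rule bm[OF assms(2) meas_fst_pp])
  show "finite_measure_subalgebra M (vimage_algebra (space M) fst borel)"
    unfolding finite_measure_subalgebra_def finite_measure_subalgebra_axioms_def subalgebra_def
  proof (intro conjI)
    show "finite_measure M" using assms(1) by (rule prob_space.finite_measure)
    show "sets (vimage_algebra (space M) fst borel) \<subseteq> sets M"
    proof -
      have E: "sets (vimage_algebra (space M) fst (borel :: pt measure)) = {fst -` A \<inter> space M | A. A \<in> sets borel}"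
        by (rule sets_vimage_algebra2) simp
      show ?thesis unfolding E using measurable_sets[OF fm] by blast
    qed
    show "space (vimage_algebra (space M) fst borel) = space M" by (rule space_vimage_algebra)
  qed
qed

lemma space_borelM:
  fixes M :: "'a::topological_space measure"
  assumes "sets M = sets borel" shows "space M = UNIV"
  using sets_eq_imp_space_eq[OF assms] by simp

lemma fiber_const:
  fixes g :: "pt \<times> pt \<Rightarrow> real"
  assumes "g \<in> borel_measurable (vimage_algebra UNIV fst borel)"
  shows "g p = g (fst p, 0)"
proof -
  have S: "g -` {g p} \<inter> space (vimage_algebra UNIV fst borel) \<in> sets (vimage_algebra UNIV fst borel)"
    using assms by (rule measurable_sets) simp
  have sp: "space (vimage_algebra UNIV fst (borel :: pt measure)) = (UNIV :: (pt \<times> pt) set)"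
    by (rule space_vimage_algebra)
  have E: "sets (vimage_algebra UNIV fst (borel :: pt measure)) = {fst -` A \<inter> UNIV | A. A \<in> sets borel}"
    by (rule sets_vimage_algebra2) simp
  from S obtain B where B: "g -` {g p} = fst -` B \<inter> UNIV"
    unfolding sp E by blast
  have "p \<in> g -` {g p}" by simp
  then have "fst p \<in> B" unfolding B by simp
  then have "(fst p, 0) \<in> g -` {g p}" unfolding B by simp
  then show ?thesis by simp
qed

lemma fiber_meas:
  fixes g :: "pt \<times> pt \<Rightarrow> real"
  assumes "g \<in> borel_measurable (vimage_algebra UNIV fst borel)"
  shows "(\<lambda>x. g (x, 0)) \<in> borel_measurable borel"
proof -
  have "(\<lambda>x::pt. (x, 0::pt)) \<in> measurable borel (vimage_algebra UNIV fst borel)"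
  proof (rule measurable_vimage_algebra2)
    show "(\<lambda>x::pt. (x, 0::pt)) \<in> space borel \<rightarrow> UNIV" by simp
    show "(\<lambda>x::pt. fst (x, 0::pt)) \<in> borel \<rightarrow>\<^sub>M borel" by simp
  qed
  then show ?thesis using assms by (rule measurable_compose)
qed

lemma abs_prod_le: "\<bar>(a::real) * b\<bar> \<le> a^2 + b^2"
proof -
  have "0 \<le> (\<bar>a\<bar> - \<bar>b\<bar>)^2" by simp
  then have h1: "2 * (\<bar>a\<bar> * \<bar>b\<bar>) \<le> a^2 + b^2" by (simp add: power2_diff)
  have h2: "0 \<le> \<bar>a\<bar> * \<bar>b\<bar>" by simp
  have "\<bar>a\<bar> * \<bar>b\<bar> \<le> a^2 + b^2" using h1 h2 by linarith
  then show ?thesis by (simp only: abs_mult)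
qed

lemma L2_prod:
  fixes f g :: "'a \<Rightarrow> real"
  assumes "integrable M (\<lambda>x. (f x)^2)" "integrable M (\<lambda>x. (g x)^2)"
    "f \<in> borel_measurable M" "g \<in> borel_measurable M"
  shows "integrable M (\<lambda>x. f x * g x)"
proof (rule Bochner_Integration.integrable_bound)
  show "integrable M (\<lambda>x. (f x)^2 + (g x)^2)" using assms(1,2) by (rule Bochner_Integration.integrable_add)
  show "(\<lambda>x. f x * g x) \<in> borel_measurable M" using assms(3,4) by (rule borel_measurable_times)
  show "AE x in M. norm (f x * g x) \<le> norm ((f x)^2 + (g x)^2)"
  proof (rule AE_I2)
    fix x
    have "\<bar>f x * g x\<bar> \<le> (f x)^2 + (g x)^2" by (rule abs_prod_le)
    then show "norm (f x * g x) \<le> norm ((f x)^2 + (g x)^2)" by simp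
  qed
qed

lemma cond_test:
  fixes M :: "(pt \<times> pt) measure" and g :: "pt \<times> pt \<Rightarrow> real" and k \<psi> :: "pt \<Rightarrow> real"
  assumes M: "prob_space M" "sets M = sets borel"
    and g: "g \<in> borel_measurable borel" "integrable M (\<lambda>p. (g p)^2)"
    and k: "AE p in M. real_cond_exp M (vimage_algebra (space M) fst borel) g p = k (fst p)"
    and km: "k \<in> borel_measurable borel"
    and \<psi>: "\<psi> \<in> borel_measurable borel" "integrable M (\<lambda>p. (\<psi> (fst p))^2)"
  shows "integrable M (\<lambda>p. \<psi> (fst p) * g p)"
    "(\<integral>p. \<psi> (fst p) * g p \<partial>M) = (\<integral>p. \<psi> (fst p) * k (fst p) \<partial>M)"
proof -
  interpret S: sigma_finite_subalgebra M "vimage_algebra (space M) fst borel"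
    by (rule subalg_fst[OF M])
  have fM: "fst \<in> measurable M borel" by (rule bm[OF M(2) meas_fst_pp])
  have gm: "g \<in> borel_measurable M" by (rule bm[OF M(2) g(1)])
  have pm: "(\<lambda>p. \<psi> (fst p)) \<in> borel_measurable M" using measurable_compose[OF fM \<psi>(1)] .
  have kM: "(\<lambda>p. k (fst p)) \<in> borel_measurable M" using measurable_compose[OF fM km] .
  show I: "integrable M (\<lambda>p. \<psi> (fst p) * g p)"
    by (rule L2_prod[OF \<psi>(2) g(2) pm gm])
  have fF: "fst \<in> measurable (vimage_algebra (space M) fst borel) borel"
    by (rule measurable_vimage_algebra1) simp
  have pF: "(\<lambda>p. \<psi> (fst p)) \<in> borel_measurable (vimage_algebra (space M) fst borel)"
    using measurable_compose[OF fF \<psi>(1)] .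
  have "(\<integral>p. \<psi> (fst p) * g p \<partial>M) = (\<integral>p. \<psi> (fst p) * real_cond_exp M (vimage_algebra (space M) fst borel) g p \<partial>M)"
    by (rule S.real_cond_exp_intg(2)[OF I pF gm, symmetric])
  also have "\<dots> = (\<integral>p. \<psi> (fst p) * k (fst p) \<partial>M)"
  proof (rule integral_cong_AE)
    show "(\<lambda>p. \<psi> (fst p) * k (fst p)) \<in> borel_measurable M" using pm kM by (rule borel_measurable_times)
    show "(\<lambda>p. \<psi> (fst p) * real_cond_exp M (vimage_algebra (space M) fst borel) g p) \<in> borel_measurable M"
      using pm borel_measurable_cond_exp2 by (rule borel_measurable_times)
    show "AE p in M. \<psi> (fst p) * real_cond_exp M (vimage_algebra (space M) fst borel) g p = \<psi> (fst p) * k (fst p)"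
      using k by eventually_elim simp
  qed
  finally show "(\<integral>p. \<psi> (fst p) * g p \<partial>M) = (\<integral>p. \<psi> (fst p) * k (fst p) \<partial>M)" .
qed

lemma int_fst:
  fixes M :: "(pt \<times> pt) measure" and f :: "pt \<Rightarrow> real"
  assumes "sets M = sets borel" "f \<in> borel_measurable borel"
  shows "integrable (distr M borel fst) f = integrable M (\<lambda>p. f (fst p))"
    "integral\<^sup>L (distr M borel fst) f = (\<integral>p. f (fst p) \<partial>M)"
  using integrable_distr_eq[OF bm[OF assms(1) meas_fst_pp] assms(2)]
    integral_distr[OF bm[OF assms(1) meas_fst_pp] assms(2)] by auto

lemma int_snd:
  fixes M :: "(pt \<times> pt) measure" and f :: "pt \<Rightarrow> real"
  assumes "sets M = sets borel" "f \<in> borel_measurable borel"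
  shows "integrable (distr M borel snd) f = integrable M (\<lambda>p. f (snd p))"
    "integral\<^sup>L (distr M borel snd) f = (\<integral>p. f (snd p) \<partial>M)"
  using integrable_distr_eq[OF bm[OF assms(1) meas_snd_pp] assms(2)]
    integral_distr[OF bm[OF assms(1) meas_snd_pp] assms(2)] by auto

lemma int_T:
  fixes M :: "(pt \<times> pt) measure" and f :: "pt \<times> pt \<Rightarrow> real" and T :: "pt \<times> pt \<Rightarrow> pt \<times> pt"
  assumes "sets M = sets borel" "f \<in> borel_measurable borel" "T \<in> borel_measurable borel"
  shows "integrable (distr M borel T) f = integrable M (\<lambda>p. f (T p))"
    "integral\<^sup>L (distr M borel T) f = (\<integral>p. f (T p) \<partial>M)"
  using integrable_distr_eq[OF bm[OF assms(1) assms(3)] assms(2)]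
    integral_distr[OF bm[OF assms(1) assms(3)] assms(2)] by auto

lemma sq_pt:
  fixes M :: "pt measure"
  assumes "sets M = sets borel" "integrable M (\<lambda>z. (norm z)^2)"
  shows "integrable M (\<lambda>z. (fst z)^2)" "integrable M (\<lambda>z. (snd z)^2)"
proof -
  have m1: "(\<lambda>z::pt. (fst z)^2) \<in> borel_measurable M" "(\<lambda>z::pt. (snd z)^2) \<in> borel_measurable M"
    by (rule bm[OF assms(1)], measurable)+
  have n: "(norm z)^2 = (fst z)^2 + (snd z)^2" for z :: pt
    by (cases z) (simp add: norm_Pair)
  show "integrable M (\<lambda>z. (fst z)^2)"
    by (rule Bochner_Integration.integrable_bound[OF assms(2) m1(1)]) (auto simp: n)
  show "integrable M (\<lambda>z. (snd z)^2)"
    by (rule Bochner_Integration.integrable_bound[OF assms(2) m1(2)]) (auto simp: n)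
qed

lemma sq_pp:
  fixes M :: "(pt \<times> pt) measure"
  assumes "sets M = sets borel" "integrable M (\<lambda>z. (norm z)^2)"
  shows "integrable M (\<lambda>q. (fst (fst q))^2)" "integrable M (\<lambda>q. (snd (fst q))^2)"
proof -
  have m1: "(\<lambda>q::pt\<times>pt. (fst (fst q))^2) \<in> borel_measurable M" "(\<lambda>q::pt\<times>pt. (snd (fst q))^2) \<in> borel_measurable M"
    by (rule bm[OF assms(1)], measurable)+
  have n: "(norm q)^2 = (fst (fst q))^2 + (snd (fst q))^2 + (fst (snd q))^2 + (snd (snd q))^2" for q :: "pt \<times> pt"
    by (cases q, rename_tac a b c, case_tac a) (simp add: norm_Pair)
  show "integrable M (\<lambda>q. (fst (fst q))^2)"
    by (rule Bochner_Integration.integrable_bound[OF assms(2) m1(1)]) (auto simp: n)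
  show "integrable M (\<lambda>q. (snd (fst q))^2)"
    by (rule Bochner_Integration.integrable_bound[OF assms(2) m1(2)]) (auto simp: n)
qed

lemma norm_sq_pp:
  "(norm q)^2 = (fst (fst q))^2 + (snd (fst q))^2 + (fst (snd q))^2 + (snd (snd q))^2" for q :: "pt \<times> pt"
  by (cases q, rename_tac a b c, case_tac a) (simp add: norm_Pair)

lemma L2_lin:
  fixes f g :: "'a \<Rightarrow> real"
  assumes "integrable M (\<lambda>x. (f x)^2)" "integrable M (\<lambda>x. (g x)^2)"
    "f \<in> borel_measurable M" "g \<in> borel_measurable M"
  shows "integrable M (\<lambda>x. (a * f x + b * g x)^2)"
proof -
  have e: "(a * f x + b * g x)^2 = a^2 * (f x)^2 + (2*a*b) * (f x * g x) + b^2 * (g x)^2" for x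
    by (simp add: power2_eq_square algebra_simps)
  have "integrable M (\<lambda>x. f x * g x)" by (rule L2_prod[OF assms])
  then show ?thesis unfolding e using assms by auto
qed

lemma cost_split:
  fixes M :: "(pt \<times> pt) measure"
  assumes "integrable M (\<lambda>q. fst (fst q) * snd (fst q))" "integrable M (\<lambda>q. fst (fst q) * snd (snd q))"
    "integrable M (\<lambda>q. snd (fst q) * fst (snd q))" "integrable M (\<lambda>q. fst (snd q) * snd (snd q))"
  shows "total_cost M = (\<integral>q. fst (fst q) * snd (fst q) \<partial>M) - (\<integral>q. fst (fst q) * snd (snd q) \<partial>M)
     - (\<integral>q. snd (fst q) * fst (snd q) \<partial>M) + (\<integral>q. fst (snd q) * snd (snd q) \<partial>M)"
proof -
  have e: "cost (fst q) (snd q) = fst (fst q) * snd (fst q) - fst (fst q) * snd (snd q)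
     - snd (fst q) * fst (snd q) + fst (snd q) * snd (snd q)" for q :: "pt \<times> pt"
    by (simp add: cost_def algebra_simps)
  show ?thesis unfolding total_cost_def e using assms by simp
qed

lemma small_t:
  fixes a b c e :: real
  assumes "\<And>t. 0 < t \<Longrightarrow> t < 1 \<Longrightarrow> (1-t)^2 * a + t*(1-t)*(b+c) + t^2 * e \<le> a"
  shows "b + c \<le> 2 * a"
proof (rule ccontr)
  assume nt: "\<not> b + c \<le> 2 * a"
  define D where "D = b + c - 2 * a"
  define K where "K = a - b - c + e"
  have D: "D > 0" using nt by (simp add: D_def)
  define t where "t = min (1/2) (D / (2 * (\<bar>K\<bar> + 1)))"
  have t0: "0 < t" using D by (simp add: t_def)
  have t1: "t < 1" by (simp add: t_def)
  have "t * \<bar>K\<bar> \<le> D / (2 * (\<bar>K\<bar> + 1)) * (\<bar>K\<bar> + 1)"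
    by (rule mult_mono) (use D in \<open>auto simp: t_def\<close>)
  also have "\<dots> = D / 2" proof - have "\<bar>K\<bar> + 1 \<noteq> 0" by linarith then show ?thesis by (simp add: field_simps) qed
  finally have tk: "t * \<bar>K\<bar> \<le> D / 2" .
  have "(1-t)^2 * a + t*(1-t)*(b+c) + t^2 * e - a = t * (D + t * K)"
    by (simp add: D_def K_def power2_eq_square algebra_simps)
  moreover have "D + t * K > 0"
  proof -
    have "- (t * K) \<le> t * \<bar>K\<bar>" using t0 by (metis abs_ge_minus_self abs_mult abs_of_pos minus_mult_right)
    then show ?thesis using tk D by linarith
  qed
  ultimately have "(1-t)^2 * a + t*(1-t)*(b+c) + t^2 * e - a > 0" using t0 by simp
  with assms[OF t0 t1] show False by simp
qed

lemma mix_distr: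
  assumes "prob_space A" "prob_space B" "sets B = sets A" "f \<in> measurable A R"
  shows "distr (mix t A B) R f = mix t (distr A R f) (distr B R f)"
proof -
  have "distr (mix t A B) R f = measure_pmf (bernoulli_pmf t) \<bind> (\<lambda>b. distr (if b then B else A) R f)"
    unfolding mix_def by (rule distr_bind[OF mix_kernel[OF assms(1-3)]]) (use assms in auto)
  also have "(\<lambda>b. distr (if b then B else A) R f) = (\<lambda>b. if b then distr B R f else distr A R f)"
    by auto
  finally show ?thesis unfolding mix_def .
qed

lemma mix_same:
  assumes "prob_space A"
  shows "mix t A A = A"
  unfolding mix_def using assms
  by (simp add: bind_const' prob_space_measure_pmf prob_space_imp_subprob_space)

theorem corollary2:
  fixes \<nu> :: "pt measure" and \<gamma> :: "(pt \<times> pt) measure"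
  assumes "\<nu> \<in> P2"
    and "\<gamma> \<in> Gamma_mart \<nu>"
    and "\<forall>\<gamma>'\<in>Gamma_mart \<nu>. total_cost \<gamma> \<le> total_cost \<gamma>'"
  shows "\<forall>\<pi>\<in>Couplings (distr \<gamma> borel fst) \<nu>. total_cost \<gamma> \<le> total_cost \<pi>"
proof (intro ballI)
  fix \<pi> assume \<pi>C: "\<pi> \<in> Couplings (distr \<gamma> borel fst) \<nu>"
  define \<mu> where "\<mu> = distr \<gamma> borel fst"
  have \<gamma>p: "prob_space \<gamma>" and \<gamma>s: "sets \<gamma> = sets borel" and \<gamma>n: "integrable \<gamma> (\<lambda>z. (norm z)^2)"
    and \<gamma>\<nu>: "distr \<gamma> borel snd = \<nu>"
    and \<gamma>c1: "AE p in \<gamma>. real_cond_exp \<gamma> (vimage_algebra (space \<gamma>) fst borel) (\<lambda>q. fst (snd q)) p = fst (fst p)"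
    and \<gamma>c2: "AE p in \<gamma>. real_cond_exp \<gamma> (vimage_algebra (space \<gamma>) fst borel) (\<lambda>q. snd (snd q)) p = snd (fst p)"
    using assms(2) unfolding Gamma_mart_def P2_def by auto
  have \<pi>p: "prob_space \<pi>" and \<pi>s: "sets \<pi> = sets borel" and \<pi>\<mu>: "distr \<pi> borel fst = \<mu>"
    and \<pi>\<nu>: "distr \<pi> borel snd = \<nu>"
    using \<pi>C unfolding Couplings_def \<mu>_def by auto
  have \<nu>s: "sets \<nu> = sets borel" and \<nu>n: "integrable \<nu> (\<lambda>z. (norm z)^2)"
    using assms(1) unfolding P2_def by auto
  have \<mu>p: "prob_space \<mu>" unfolding \<mu>_def
    by (rule prob_space.prob_space_distr[OF \<gamma>p bm[OF \<gamma>s meas_fst_pp]])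
  have \<mu>fin: "finite_measure \<mu>" using \<mu>p by (rule prob_space.finite_measure)
  have \<mu>s: "sets \<mu> = sets borel" unfolding \<mu>_def by simp
  have \<nu>p: "prob_space \<nu>" using assms(1) unfolding P2_def by auto
  have \<gamma>sp: "space \<gamma> = UNIV" by (rule space_borelM[OF \<gamma>s])
  have \<pi>sp: "space \<pi> = UNIV" by (rule space_borelM[OF \<pi>s])

  have \<gamma>fst: "integrable \<gamma> (\<lambda>p. f (fst p)) = integrable \<mu> f" "(\<integral>p. f (fst p) \<partial>\<gamma>) = integral\<^sup>L \<mu> f"
    if "f \<in> borel_measurable borel" for f :: "pt \<Rightarrow> real"
    using int_fst[OF \<gamma>s that] unfolding \<mu>_def by auto
  have \<pi>fst: "integrable \<pi> (\<lambda>p. f (fst p)) = integrable \<mu> f" "(\<integral>p. f (fst p) \<partial>\<pi>) = integral\<^sup>L \<mu> f"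
    if "f \<in> borel_measurable borel" for f :: "pt \<Rightarrow> real"
    using int_fst[OF \<pi>s that] unfolding \<pi>\<mu> by auto
  have \<gamma>snd: "integrable \<gamma> (\<lambda>p. f (snd p)) = integrable \<nu> f" "(\<integral>p. f (snd p) \<partial>\<gamma>) = integral\<^sup>L \<nu> f"
    if "f \<in> borel_measurable borel" for f :: "pt \<Rightarrow> real"
    using int_snd[OF \<gamma>s that] unfolding \<gamma>\<nu> by auto
  have \<pi>snd: "integrable \<pi> (\<lambda>p. f (snd p)) = integrable \<nu> f" "(\<integral>p. f (snd p) \<partial>\<pi>) = integral\<^sup>L \<nu> f"
    if "f \<in> borel_measurable borel" for f :: "pt \<Rightarrow> real"
    using int_snd[OF \<pi>s that] unfolding \<pi>\<nu> by auto

  have \<mu>1: "integrable \<mu> (\<lambda>x. (fst x)^2)" using \<gamma>fst[of "\<lambda>x. (fst x)^2"] sq_pp(1)[OF \<gamma>s \<gamma>n] by simp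
  have \<mu>2: "integrable \<mu> (\<lambda>x. (snd x)^2)" using \<gamma>fst[of "\<lambda>x. (snd x)^2"] sq_pp(2)[OF \<gamma>s \<gamma>n] by simp
  have \<nu>1: "integrable \<nu> (\<lambda>x. (fst x)^2)" and \<nu>2: "integrable \<nu> (\<lambda>x. (snd x)^2)"
    using sq_pt[OF \<nu>s \<nu>n] by auto
  have \<mu>m: "f \<in> borel_measurable \<mu>" if "f \<in> borel_measurable borel" for f :: "pt \<Rightarrow> real"
    by (rule bm[OF \<mu>s that])
  have \<nu>m: "f \<in> borel_measurable \<nu>" if "f \<in> borel_measurable borel" for f :: "pt \<Rightarrow> real"
    by (rule bm[OF \<nu>s that])

  define F where "F = vimage_algebra (UNIV :: (pt \<times> pt) set) fst borel"
  define H1 where "H1 = real_cond_exp \<pi> F (\<lambda>q. fst (snd q))"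
  define H2 where "H2 = real_cond_exp \<pi> F (\<lambda>q. snd (snd q))"
  define h1 where "h1 = (\<lambda>x. H1 (x, 0))"
  define h2 where "h2 = (\<lambda>x. H2 (x, 0))"
  interpret \<pi>S: sigma_finite_subalgebra \<pi> F using subalg_fst[OF \<pi>p \<pi>s] \<pi>sp F_def by simp
  have H1F: "H1 \<in> borel_measurable F" unfolding H1_def by (rule borel_measurable_cond_exp)
  have H2F: "H2 \<in> borel_measurable F" unfolding H2_def by (rule borel_measurable_cond_exp)
  have H1e: "H1 q = h1 (fst q)" for q using fiber_const[OF H1F[unfolded F_def]] h1_def by simp
  have H2e: "H2 q = h2 (fst q)" for q using fiber_const[OF H2F[unfolded F_def]] h2_def by simp
  have h1m[measurable]: "h1 \<in> borel_measurable borel" using fiber_meas[OF H1F[unfolded F_def]] h1_def by simp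
  have h2m[measurable]: "h2 \<in> borel_measurable borel" using fiber_meas[OF H2F[unfolded F_def]] h2_def by simp
  have \<pi>y1: "integrable \<pi> (\<lambda>p. (fst (snd p))^2)" using \<pi>snd[of "\<lambda>x. (fst x)^2"] \<nu>1 by simp
  have \<pi>y2: "integrable \<pi> (\<lambda>p. (snd (snd p))^2)" using \<pi>snd[of "\<lambda>x. (snd x)^2"] \<nu>2 by simp
  have \<pi>y1': "integrable \<pi> (\<lambda>p. fst (snd p))"
  proof (rule finite_measure.square_integrable_imp_integrable[OF prob_space.finite_measure[OF \<pi>p]])
    show "(\<lambda>p. fst (snd p)) \<in> borel_measurable \<pi>" by (rule bm[OF \<pi>s]) measurable
  qed (rule \<pi>y1)
  have \<pi>y2': "integrable \<pi> (\<lambda>p. snd (snd p))"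
  proof (rule finite_measure.square_integrable_imp_integrable[OF prob_space.finite_measure[OF \<pi>p]])
    show "(\<lambda>p. snd (snd p)) \<in> borel_measurable \<pi>" by (rule bm[OF \<pi>s]) measurable
  qed (rule \<pi>y2)
  have "integrable \<pi> (\<lambda>q. (H1 q)^2)" unfolding H1_def
    by (rule \<pi>S.integrable_convex_cond_exp[of _ UNIV]) (use \<pi>y1' \<pi>y1 convex_power2 in auto)
  then have h1sq: "integrable \<mu> (\<lambda>x. (h1 x)^2)" using \<pi>fst[of "\<lambda>x. (h1 x)^2"] by (simp add: H1e)
  have "integrable \<pi> (\<lambda>q. (H2 q)^2)" unfolding H2_def
    by (rule \<pi>S.integrable_convex_cond_exp[of _ UNIV]) (use \<pi>y2' \<pi>y2 convex_power2 in auto)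
  then have h2sq: "integrable \<mu> (\<lambda>x. (h2 x)^2)" using \<pi>fst[of "\<lambda>x. (h2 x)^2"] by (simp add: H2e)

  have G1: "integrable \<gamma> (\<lambda>p. \<psi> (fst p) * fst (snd p)) \<and> (\<integral>p. \<psi> (fst p) * fst (snd p) \<partial>\<gamma>) = (\<integral>x. \<psi> x * fst x \<partial>\<mu>)"
    if \<psi>m: "\<psi> \<in> borel_measurable borel" and \<psi>2: "integrable \<mu> (\<lambda>x. (\<psi> x)^2)" for \<psi>
  proof -
    have a: "integrable \<gamma> (\<lambda>p. (\<psi> (fst p))^2)" using \<gamma>fst[of "\<lambda>x. (\<psi> x)^2"] \<psi>2 \<psi>m by (simp add: borel_measurable_power)
    have b: "integrable \<gamma> (\<lambda>p. (fst (snd p))^2)" using \<gamma>snd[of "\<lambda>x. (fst x)^2"] \<nu>1 by simp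
    have [measurable]: "\<psi> \<in> borel_measurable borel" by (rule \<psi>m)
    have m: "(\<lambda>x. \<psi> x * fst x) \<in> borel_measurable borel" by measurable
    note r = cond_test[OF \<gamma>p \<gamma>s _ b \<gamma>c1 meas_fst_pp \<psi>m a]
    show ?thesis using r \<gamma>fst[OF m] by simp
  qed
  have G2: "integrable \<gamma> (\<lambda>p. \<psi> (fst p) * snd (snd p)) \<and> (\<integral>p. \<psi> (fst p) * snd (snd p) \<partial>\<gamma>) = (\<integral>x. \<psi> x * snd x \<partial>\<mu>)"
    if \<psi>m: "\<psi> \<in> borel_measurable borel" and \<psi>2: "integrable \<mu> (\<lambda>x. (\<psi> x)^2)" for \<psi>
  proof -
    have a: "integrable \<gamma> (\<lambda>p. (\<psi> (fst p))^2)" using \<gamma>fst[of "\<lambda>x. (\<psi> x)^2"] \<psi>2 \<psi>m by (simp add: borel_measurable_power)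
    have b: "integrable \<gamma> (\<lambda>p. (snd (snd p))^2)" using \<gamma>snd[of "\<lambda>x. (snd x)^2"] \<nu>2 by simp
    have [measurable]: "\<psi> \<in> borel_measurable borel" by (rule \<psi>m)
    have m: "(\<lambda>x. \<psi> x * snd x) \<in> borel_measurable borel" by measurable
    note r = cond_test[OF \<gamma>p \<gamma>s _ b \<gamma>c2 meas_snd_pp \<psi>m a]
    show ?thesis using r \<gamma>fst[OF m] by simp
  qed
  have P1: "integrable \<pi> (\<lambda>p. \<psi> (fst p) * fst (snd p)) \<and> (\<integral>p. \<psi> (fst p) * fst (snd p) \<partial>\<pi>) = (\<integral>x. \<psi> x * h1 x \<partial>\<mu>)"
    if \<psi>m: "\<psi> \<in> borel_measurable borel" and \<psi>2: "integrable \<mu> (\<lambda>x. (\<psi> x)^2)" for \<psi>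
  proof -
    have a: "integrable \<pi> (\<lambda>p. (\<psi> (fst p))^2)" using \<pi>fst[of "\<lambda>x. (\<psi> x)^2"] \<psi>2 \<psi>m by (simp add: borel_measurable_power)
    have c: "AE p in \<pi>. real_cond_exp \<pi> (vimage_algebra (space \<pi>) fst borel) (\<lambda>q. fst (snd q)) p = h1 (fst p)"
      using H1e by (simp add: \<pi>sp H1_def F_def)
    have [measurable]: "\<psi> \<in> borel_measurable borel" by (rule \<psi>m)
    have m: "(\<lambda>x. \<psi> x * h1 x) \<in> borel_measurable borel" by measurable
    note r = cond_test[OF \<pi>p \<pi>s _ \<pi>y1 c h1m \<psi>m a]
    show ?thesis using r \<pi>fst[OF m] by simp
  qed
  have P2: "integrable \<pi> (\<lambda>p. \<psi> (fst p) * snd (snd p)) \<and> (\<integral>p. \<psi> (fst p) * snd (snd p) \<partial>\<pi>) = (\<integral>x. \<psi> x * h2 x \<partial>\<mu>)"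
    if \<psi>m: "\<psi> \<in> borel_measurable borel" and \<psi>2: "integrable \<mu> (\<lambda>x. (\<psi> x)^2)" for \<psi>
  proof -
    have a: "integrable \<pi> (\<lambda>p. (\<psi> (fst p))^2)" using \<pi>fst[of "\<lambda>x. (\<psi> x)^2"] \<psi>2 \<psi>m by (simp add: borel_measurable_power)
    have c: "AE p in \<pi>. real_cond_exp \<pi> (vimage_algebra (space \<pi>) fst borel) (\<lambda>q. snd (snd q)) p = h2 (fst p)"
      using H2e by (simp add: \<pi>sp H2_def F_def)
    have [measurable]: "\<psi> \<in> borel_measurable borel" by (rule \<psi>m)
    have m: "(\<lambda>x. \<psi> x * h2 x) \<in> borel_measurable borel" by measurable
    note r = cond_test[OF \<pi>p \<pi>s _ \<pi>y2 c h2m \<psi>m a]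
    show ?thesis using r \<pi>fst[OF m] by simp
  qed
  define a where "a = (\<integral>x. fst x * snd x \<partial>\<mu>)"
  define b where "b = (\<integral>x. fst x * h2 x \<partial>\<mu>)"
  define c where "c = (\<integral>x. h1 x * snd x \<partial>\<mu>)"
  define e where "e = (\<integral>x. h1 x * h2 x \<partial>\<mu>)"
  define V where "V = (\<integral>y. fst y * snd y \<partial>\<nu>)"
  have fstm: "fst \<in> borel_measurable (\<mu> :: pt measure)" by (rule \<mu>m[OF meas_fst_pp])
  have sndm: "snd \<in> borel_measurable (\<mu> :: pt measure)" by (rule \<mu>m[OF meas_snd_pp])
  have h1\<mu>: "h1 \<in> borel_measurable \<mu>" by (rule \<mu>m[OF h1m])
  have h2\<mu>: "h2 \<in> borel_measurable \<mu>" by (rule \<mu>m[OF h2m])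
  have i12: "integrable \<mu> (\<lambda>x. fst x * snd x)" by (rule L2_prod[OF \<mu>1 \<mu>2 fstm sndm])
  have i1h2: "integrable \<mu> (\<lambda>x. fst x * h2 x)" by (rule L2_prod[OF \<mu>1 h2sq fstm h2\<mu>])
  have ih12: "integrable \<mu> (\<lambda>x. h1 x * snd x)" by (rule L2_prod[OF h1sq \<mu>2 h1\<mu> sndm])
  have ihh: "integrable \<mu> (\<lambda>x. h1 x * h2 x)" by (rule L2_prod[OF h1sq h2sq h1\<mu> h2\<mu>])
  have iV: "integrable \<nu> (\<lambda>y. fst y * snd y)"
    by (rule L2_prod[OF \<nu>1 \<nu>2 \<nu>m[OF meas_fst_pp] \<nu>m[OF meas_snd_pp]])
  have mV: "(\<lambda>y::pt. fst y * snd y) \<in> borel_measurable borel" by measurable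
  have fst1[simp]: "integrable \<mu> (\<lambda>x. 1^2)" "integrable \<mu> (\<lambda>x. 1)"
    using finite_measure.integrable_const[OF \<mu>fin] by auto

  have cost\<gamma>: "total_cost \<gamma> = V - a"
  proof -
    have m1: "(\<lambda>x::pt. fst x * snd x) \<in> borel_measurable borel" by measurable
    have A1: "integrable \<gamma> (\<lambda>q. fst (fst q) * snd (fst q))" "(\<integral>q. fst (fst q) * snd (fst q) \<partial>\<gamma>) = a"
      using \<gamma>fst[OF m1] i12 a_def by auto
    have A2: "integrable \<gamma> (\<lambda>q. fst (fst q) * snd (snd q))" "(\<integral>q. fst (fst q) * snd (snd q) \<partial>\<gamma>) = a"
      using G2[OF meas_fst_pp \<mu>1] a_def by auto
    have A3: "integrable \<gamma> (\<lambda>q. snd (fst q) * fst (snd q))" "(\<integral>q. snd (fst q) * fst (snd q) \<partial>\<gamma>) = a"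
      using G1[OF meas_snd_pp \<mu>2] a_def by (auto simp: mult.commute)
    have A4: "integrable \<gamma> (\<lambda>q. fst (snd q) * snd (snd q))" "(\<integral>q. fst (snd q) * snd (snd q) \<partial>\<gamma>) = V"
      using \<gamma>snd[OF mV] iV V_def by auto
    show ?thesis using cost_split[OF A1(1) A2(1) A3(1) A4(1)] A1(2) A2(2) A3(2) A4(2) by simp
  qed
  have cost\<pi>: "total_cost \<pi> = a - b - c + V"
  proof -
    have m1: "(\<lambda>x::pt. fst x * snd x) \<in> borel_measurable borel" by measurable
    have A1: "integrable \<pi> (\<lambda>q. fst (fst q) * snd (fst q))" "(\<integral>q. fst (fst q) * snd (fst q) \<partial>\<pi>) = a"
      using \<pi>fst[OF m1] i12 a_def by auto
    have A2: "integrable \<pi> (\<lambda>q. fst (fst q) * snd (snd q))" "(\<integral>q. fst (fst q) * snd (snd q) \<partial>\<pi>) = b"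
      using P2[OF meas_fst_pp \<mu>1] b_def by auto
    have A3: "integrable \<pi> (\<lambda>q. snd (fst q) * fst (snd q))" "(\<integral>q. snd (fst q) * fst (snd q) \<partial>\<pi>) = c"
      using P1[OF meas_snd_pp \<mu>2] c_def by (auto simp: mult.commute)
    have A4: "integrable \<pi> (\<lambda>q. fst (snd q) * snd (snd q))" "(\<integral>q. fst (snd q) * snd (snd q) \<partial>\<pi>) = V"
      using \<pi>snd[OF mV] iV V_def by auto
    show ?thesis using cost_split[OF A1(1) A2(1) A3(1) A4(1)] A1(2) A2(2) A3(2) A4(2) by simp
  qed

  have key: "(1-t)^2 * a + t*(1-t)*(b+c) + t^2 * e \<le> a" if t0: "0 < t" and t1: "t < 1" for t
  proof -
    define z1 where "z1 = (\<lambda>x::pt. (1-t) * fst x + t * h1 x)"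
    define z2 where "z2 = (\<lambda>x::pt. (1-t) * snd x + t * h2 x)"
    define z where "z = (\<lambda>x. (z1 x, z2 x))"
    define T where "T = (\<lambda>p::pt\<times>pt. (z (fst p), snd p))"
    have z1m[measurable]: "z1 \<in> borel_measurable borel" unfolding z1_def by measurable
    have z2m[measurable]: "z2 \<in> borel_measurable borel" unfolding z2_def by measurable
    have zm[measurable]: "z \<in> measurable borel borel" unfolding z_def by measurable
    have Tm[measurable]: "T \<in> measurable borel borel" unfolding T_def by measurable
    define A where "A = distr \<gamma> borel T"
    define B where "B = distr \<pi> borel T"
    define \<rho> where "\<rho> = mix t A B"
    have Ap: "prob_space A" unfolding A_def by (rule prob_space.prob_space_distr[OF \<gamma>p bm[OF \<gamma>s Tm]])
    have Bp: "prob_space B" unfolding B_def by (rule prob_space.prob_space_distr[OF \<pi>p bm[OF \<pi>s Tm]])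
    have As: "sets A = sets borel" unfolding A_def by simp
    have Bs: "sets B = sets borel" unfolding B_def by simp
    have BA: "sets B = sets A" using As Bs by simp
    have \<rho>s: "sets \<rho> = sets borel" unfolding \<rho>_def using mix_sets[OF Ap Bp BA] As by simp
    have \<rho>p: "prob_space \<rho>" unfolding \<rho>_def by (rule mix_prob[OF Ap Bp BA])
    have \<rho>sp: "space \<rho> = UNIV" by (rule space_borelM[OF \<rho>s])
    have z1sq: "integrable \<mu> (\<lambda>x. (z1 x)^2)" unfolding z1_def by (rule L2_lin[OF \<mu>1 h1sq fstm h1\<mu>])
    have z2sq: "integrable \<mu> (\<lambda>x. (z2 x)^2)" unfolding z2_def by (rule L2_lin[OF \<mu>2 h2sq sndm h2\<mu>])
    have z1\<mu>: "z1 \<in> borel_measurable \<mu>" by (rule \<mu>m[OF z1m])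
    have z2\<mu>: "z2 \<in> borel_measurable \<mu>" by (rule \<mu>m[OF z2m])

    have RI: "integrable \<rho> f \<and> integral\<^sup>L \<rho> f = t * (\<integral>p. f (T p) \<partial>\<pi>) + (1 - t) * (\<integral>p. f (T p) \<partial>\<gamma>)"
      if fm: "f \<in> borel_measurable borel" and f\<gamma>: "integrable \<gamma> (\<lambda>p. f (T p))" and f\<pi>: "integrable \<pi> (\<lambda>p. f (T p))" for f :: "pt \<times> pt \<Rightarrow> real"
    proof -
      have iA: "integrable A f" unfolding A_def using int_T(1)[OF \<gamma>s fm Tm] f\<gamma> by simp
      have iB: "integrable B f" unfolding B_def using int_T(1)[OF \<pi>s fm Tm] f\<pi> by simp
      have eA: "integral\<^sup>L A f = (\<integral>p. f (T p) \<partial>\<gamma>)" unfolding A_def by (rule int_T(2)[OF \<gamma>s fm Tm])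
      have eB: "integral\<^sup>L B f = (\<integral>p. f (T p) \<partial>\<pi>)" unfolding B_def by (rule int_T(2)[OF \<pi>s fm Tm])
      show ?thesis unfolding \<rho>_def using mix_integral[OF Ap Bp BA _ _ iA iB] t0 t1 eA eB by simp
    qed

    have C1: "integrable \<rho> (\<lambda>q. \<psi> (fst q) * fst (snd q)) \<and> (\<integral>q. \<psi> (fst q) * fst (snd q) \<partial>\<rho>) = (\<integral>x. \<psi> (z x) * z1 x \<partial>\<mu>)"
      if \<psi>m: "\<psi> \<in> borel_measurable borel" and \<psi>2: "integrable \<mu> (\<lambda>x. (\<psi> (z x))^2)" for \<psi>
    proof -
      have [measurable]: "\<psi> \<in> borel_measurable borel" by (rule \<psi>m)
      have \<phi>m: "(\<lambda>x. \<psi> (z x)) \<in> borel_measurable borel" by measurable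
      have \<phi>\<mu>: "(\<lambda>x. \<psi> (z x)) \<in> borel_measurable \<mu>" by (rule \<mu>m[OF \<phi>m])
      note g = G1[OF \<phi>m \<psi>2] and p = P1[OF \<phi>m \<psi>2]
      have fm: "(\<lambda>q::pt\<times>pt. \<psi> (fst q) * fst (snd q)) \<in> borel_measurable borel" by measurable
      have r: "integrable \<rho> (\<lambda>q. \<psi> (fst q) * fst (snd q)) \<and> (\<integral>q. \<psi> (fst q) * fst (snd q) \<partial>\<rho>) =
          t * (\<integral>x. \<psi> (z x) * h1 x \<partial>\<mu>) + (1 - t) * (\<integral>x. \<psi> (z x) * fst x \<partial>\<mu>)"
        using RI[OF fm] g p by (simp add: T_def)
      have i1: "integrable \<mu> (\<lambda>x. \<psi> (z x) * h1 x)" by (rule L2_prod[OF \<psi>2 h1sq \<phi>\<mu> h1\<mu>])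
      have i2: "integrable \<mu> (\<lambda>x. \<psi> (z x) * fst x)" by (rule L2_prod[OF \<psi>2 \<mu>1 \<phi>\<mu> fstm])
      have ex: "\<psi> (z x) * z1 x = t * (\<psi> (z x) * h1 x) + (1 - t) * (\<psi> (z x) * fst x)" for x
        by (simp add: z1_def algebra_simps)
      have "(\<integral>x. \<psi> (z x) * z1 x \<partial>\<mu>) = t * (\<integral>x. \<psi> (z x) * h1 x \<partial>\<mu>) + (1 - t) * (\<integral>x. \<psi> (z x) * fst x \<partial>\<mu>)"
        unfolding ex using i1 i2 by simp
      then show ?thesis using r by simp
    qed
    have C2: "integrable \<rho> (\<lambda>q. \<psi> (fst q) * snd (snd q)) \<and> (\<integral>q. \<psi> (fst q) * snd (snd q) \<partial>\<rho>) = (\<integral>x. \<psi> (z x) * z2 x \<partial>\<mu>)"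
      if \<psi>m: "\<psi> \<in> borel_measurable borel" and \<psi>2: "integrable \<mu> (\<lambda>x. (\<psi> (z x))^2)" for \<psi>
    proof -
      have [measurable]: "\<psi> \<in> borel_measurable borel" by (rule \<psi>m)
      have \<phi>m: "(\<lambda>x. \<psi> (z x)) \<in> borel_measurable borel" by measurable
      have \<phi>\<mu>: "(\<lambda>x. \<psi> (z x)) \<in> borel_measurable \<mu>" by (rule \<mu>m[OF \<phi>m])
      note g = G2[OF \<phi>m \<psi>2] and p = P2[OF \<phi>m \<psi>2]
      have fm: "(\<lambda>q::pt\<times>pt. \<psi> (fst q) * snd (snd q)) \<in> borel_measurable borel" by measurable
      have r: "integrable \<rho> (\<lambda>q. \<psi> (fst q) * snd (snd q)) \<and> (\<integral>q. \<psi> (fst q) * snd (snd q) \<partial>\<rho>) =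
          t * (\<integral>x. \<psi> (z x) * h2 x \<partial>\<mu>) + (1 - t) * (\<integral>x. \<psi> (z x) * snd x \<partial>\<mu>)"
        using RI[OF fm] g p by (simp add: T_def)
      have i1: "integrable \<mu> (\<lambda>x. \<psi> (z x) * h2 x)" by (rule L2_prod[OF \<psi>2 h2sq \<phi>\<mu> h2\<mu>])
      have i2: "integrable \<mu> (\<lambda>x. \<psi> (z x) * snd x)" by (rule L2_prod[OF \<psi>2 \<mu>2 \<phi>\<mu> sndm])
      have ex: "\<psi> (z x) * z2 x = t * (\<psi> (z x) * h2 x) + (1 - t) * (\<psi> (z x) * snd x)" for x
        by (simp add: z2_def algebra_simps)
      have "(\<integral>x. \<psi> (z x) * z2 x \<partial>\<mu>) = t * (\<integral>x. \<psi> (z x) * h2 x \<partial>\<mu>) + (1 - t) * (\<integral>x. \<psi> (z x) * snd x \<partial>\<mu>)"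
        unfolding ex using i1 i2 by simp
      then show ?thesis using r by simp
    qed
    have D1: "integrable \<rho> (\<lambda>q. \<psi> (fst q) * fst (fst q)) \<and> (\<integral>q. \<psi> (fst q) * fst (fst q) \<partial>\<rho>) = (\<integral>x. \<psi> (z x) * z1 x \<partial>\<mu>)"
      if \<psi>m: "\<psi> \<in> borel_measurable borel" and \<psi>2: "integrable \<mu> (\<lambda>x. (\<psi> (z x))^2)" for \<psi>
    proof -
      have [measurable]: "\<psi> \<in> borel_measurable borel" by (rule \<psi>m)
      have \<phi>m: "(\<lambda>x. \<psi> (z x)) \<in> borel_measurable borel" by measurable
      have \<phi>\<mu>: "(\<lambda>x. \<psi> (z x)) \<in> borel_measurable \<mu>" by (rule \<mu>m[OF \<phi>m])
      have i: "integrable \<mu> (\<lambda>x. \<psi> (z x) * z1 x)" by (rule L2_prod[OF \<psi>2 z1sq \<phi>\<mu> z1\<mu>])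
      have m2: "(\<lambda>x. \<psi> (z x) * z1 x) \<in> borel_measurable borel" by measurable
      have fm: "(\<lambda>q::pt\<times>pt. \<psi> (fst q) * fst (fst q)) \<in> borel_measurable borel" by measurable
      have e1: "(\<lambda>p. (\<lambda>q. \<psi> (fst q) * fst (fst q)) (T p)) = (\<lambda>p. \<psi> (z (fst p)) * z1 (fst p))"
        by (simp add: T_def z_def)
      show ?thesis using RI[OF fm] \<gamma>fst[OF m2] \<pi>fst[OF m2] i unfolding e1 by (simp add: algebra_simps)
    qed
    have D2: "integrable \<rho> (\<lambda>q. \<psi> (fst q) * snd (fst q)) \<and> (\<integral>q. \<psi> (fst q) * snd (fst q) \<partial>\<rho>) = (\<integral>x. \<psi> (z x) * z2 x \<partial>\<mu>)"
      if \<psi>m: "\<psi> \<in> borel_measurable borel" and \<psi>2: "integrable \<mu> (\<lambda>x. (\<psi> (z x))^2)" for \<psi>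
    proof -
      have [measurable]: "\<psi> \<in> borel_measurable borel" by (rule \<psi>m)
      have \<phi>m: "(\<lambda>x. \<psi> (z x)) \<in> borel_measurable borel" by measurable
      have \<phi>\<mu>: "(\<lambda>x. \<psi> (z x)) \<in> borel_measurable \<mu>" by (rule \<mu>m[OF \<phi>m])
      have i: "integrable \<mu> (\<lambda>x. \<psi> (z x) * z2 x)" by (rule L2_prod[OF \<psi>2 z2sq \<phi>\<mu> z2\<mu>])
      have m2: "(\<lambda>x. \<psi> (z x) * z2 x) \<in> borel_measurable borel" by measurable
      have fm: "(\<lambda>q::pt\<times>pt. \<psi> (fst q) * snd (fst q)) \<in> borel_measurable borel" by measurable
      have e1: "(\<lambda>p. (\<lambda>q. \<psi> (fst q) * snd (fst q)) (T p)) = (\<lambda>p. \<psi> (z (fst p)) * z2 (fst p))"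
        by (simp add: T_def z_def)
      show ?thesis using RI[OF fm] \<gamma>fst[OF m2] \<pi>fst[OF m2] i unfolding e1 by (simp add: algebra_simps)
    qed
    have zfst: "(\<lambda>x. (fst (z x))^2) = (\<lambda>x. (z1 x)^2)" "(\<lambda>x. (snd (z x))^2) = (\<lambda>x. (z2 x)^2)"
      by (auto simp: z_def)
    have zfst2: "integrable \<mu> (\<lambda>x. (fst (z x))^2)" "integrable \<mu> (\<lambda>x. (snd (z x))^2)"
      using z1sq z2sq zfst by auto
    have one2: "integrable \<mu> (\<lambda>x. ((\<lambda>_::pt. 1::real) (z x))^2)" by simp

    have Y: "integrable \<rho> (\<lambda>q. f (snd q)) \<and> (\<integral>q. f (snd q) \<partial>\<rho>) = integral\<^sup>L \<nu> f"
      if fm: "f \<in> borel_measurable borel" and fi: "integrable \<nu> f" for f :: "pt \<Rightarrow> real"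
    proof -
      have [measurable]: "f \<in> borel_measurable borel" by (rule fm)
      have m: "(\<lambda>q::pt\<times>pt. f (snd q)) \<in> borel_measurable borel" by measurable
      have e1: "(\<lambda>p. (\<lambda>q. f (snd q)) (T p)) = (\<lambda>p. f (snd p))" by (simp add: T_def)
      show ?thesis using RI[OF m] \<gamma>snd[OF fm] \<pi>snd[OF fm] fi unfolding e1 by (simp add: algebra_simps)
    qed

    have \<rho>mart: "\<rho> \<in> Gamma_mart \<nu>"
    proof -
      have n: "(norm q)^2 = fst (fst q) * fst (fst q) + snd (fst q) * snd (fst q) + (fst (snd q))^2 + (snd (snd q))^2"
        for q :: "pt \<times> pt"
        using norm_sq_pp[of q] by (simp only: power2_eq_square)
      have sq1: "(\<lambda>x::pt. (fst x)^2) \<in> borel_measurable borel" "(\<lambda>x::pt. (snd x)^2) \<in> borel_measurable borel"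
        by (rule borel_measurable_power[OF meas_fst_pp], rule borel_measurable_power[OF meas_snd_pp])
      have i1: "integrable \<rho> (\<lambda>q. fst (fst q) * fst (fst q))" by (rule conjunct1[OF D1[OF meas_fst_pp zfst2(1)]])
      have i2: "integrable \<rho> (\<lambda>q. snd (fst q) * snd (fst q))" by (rule conjunct1[OF D2[OF meas_snd_pp zfst2(2)]])
      have i3: "integrable \<rho> (\<lambda>q. (fst (snd q))^2)" by (rule conjunct1[OF Y[OF sq1(1) \<nu>1]])
      have i4: "integrable \<rho> (\<lambda>q. (snd (snd q))^2)" by (rule conjunct1[OF Y[OF sq1(2) \<nu>2]])
      have "integrable \<rho> (\<lambda>q. fst (fst q) * fst (fst q) + snd (fst q) * snd (fst q) + (fst (snd q))^2 + (snd (snd q))^2)"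
        by (intro Bochner_Integration.integrable_add i1 i2 i3 i4)
      then have P2\<rho>: "\<rho> \<in> P2" unfolding P2_def using \<rho>p \<rho>s n by simp
      have "distr \<rho> borel snd = mix t (distr A borel snd) (distr B borel snd)"
        unfolding \<rho>_def by (rule mix_distr[OF Ap Bp BA bm[OF As meas_snd_pp]])
      moreover have "distr A borel snd = \<nu>"
      proof -
        have "distr A borel snd = distr \<gamma> borel (snd \<circ> T)"
          unfolding A_def by (rule distr_distr[OF meas_snd_pp bm[OF \<gamma>s Tm]])
        also have "snd \<circ> T = snd" by (auto simp: T_def)
        finally show ?thesis using \<gamma>\<nu> by simp
      qed
      moreover have "distr B borel snd = \<nu>"
      proof -
        have "distr B borel snd = distr \<pi> borel (snd \<circ> T)"
          unfolding B_def by (rule distr_distr[OF meas_snd_pp bm[OF \<pi>s Tm]])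
        also have "snd \<circ> T = snd" by (auto simp: T_def)
        finally show ?thesis using \<pi>\<nu> by simp
      qed
      ultimately have d\<rho>: "distr \<rho> borel snd = \<nu>" using mix_same[OF \<nu>p] by simp
      interpret \<rho>S: sigma_finite_subalgebra \<rho> "vimage_algebra (space \<rho>) fst borel"
        by (rule subalg_fst[OF \<rho>p \<rho>s])
      have fF: "fst \<in> measurable (vimage_algebra (space \<rho>) fst borel) borel"
        by (rule measurable_vimage_algebra1) simp
      have E: "sets (vimage_algebra (space \<rho>) fst (borel :: pt measure)) = {fst -` S \<inter> space \<rho> | S. S \<in> sets borel}"
        by (rule sets_vimage_algebra2) simp
      have ind: "integrable \<mu> (\<lambda>x. ((indicator S :: pt \<Rightarrow> real) (z x))^2)" if "S \<in> sets borel" for S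
      proof (rule finite_measure.integrable_const_bound[OF \<mu>fin, where B=1])
        show "AE x in \<mu>. norm (((indicator S :: pt \<Rightarrow> real) (z x))^2) \<le> 1"
          by (auto simp: indicator_def)
        have [measurable]: "S \<in> sets borel" by (rule that)
        show "(\<lambda>x. ((indicator S :: pt \<Rightarrow> real) (z x))^2) \<in> borel_measurable \<mu>"
          by (rule \<mu>m) measurable
      qed
      have sl: "(\<integral>x\<in>fst -` S \<inter> space \<rho>. f x \<partial>\<rho>) = (\<integral>q. indicator S (fst q) * f q \<partial>\<rho>)" for S and f :: "pt \<times> pt \<Rightarrow> real"
        unfolding set_lebesgue_integral_def \<rho>sp by (simp add: indicator_def)
      have c1: "AE p in \<rho>. real_cond_exp \<rho> (vimage_algebra (space \<rho>) fst borel) (\<lambda>q. fst (snd q)) p = fst (fst p)"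
      proof (rule \<rho>S.real_cond_exp_charact)
        fix S0 assume "S0 \<in> sets (vimage_algebra (space \<rho>) fst borel)"
        then obtain S where S: "S \<in> sets borel" and S0: "S0 = fst -` S \<inter> space \<rho>" unfolding E by blast
        have im: "(indicator S :: pt \<Rightarrow> real) \<in> borel_measurable borel" using S by simp
        show "(\<integral>x\<in>S0. fst (snd x) \<partial>\<rho>) = (\<integral>x\<in>S0. fst (fst x) \<partial>\<rho>)"
          unfolding S0 sl using C1[OF im ind[OF S]] D1[OF im ind[OF S]] by simp
      next
        show "integrable \<rho> (\<lambda>q. fst (snd q))" using C1[of "\<lambda>_. 1"] one2 by simp
        show "integrable \<rho> (\<lambda>q. fst (fst q))" using D1[of "\<lambda>_. 1"] one2 by simp
        show "(\<lambda>q. fst (fst q)) \<in> borel_measurable (vimage_algebra (space \<rho>) fst borel)"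
          using measurable_compose[OF fF meas_fst_pp] .
      qed
      have c2: "AE p in \<rho>. real_cond_exp \<rho> (vimage_algebra (space \<rho>) fst borel) (\<lambda>q. snd (snd q)) p = snd (fst p)"
      proof (rule \<rho>S.real_cond_exp_charact)
        fix S0 assume "S0 \<in> sets (vimage_algebra (space \<rho>) fst borel)"
        then obtain S where S: "S \<in> sets borel" and S0: "S0 = fst -` S \<inter> space \<rho>" unfolding E by blast
        have im: "(indicator S :: pt \<Rightarrow> real) \<in> borel_measurable borel" using S by simp
        show "(\<integral>x\<in>S0. snd (snd x) \<partial>\<rho>) = (\<integral>x\<in>S0. snd (fst x) \<partial>\<rho>)"
          unfolding S0 sl using C2[OF im ind[OF S]] D2[OF im ind[OF S]] by simp
      next
        show "integrable \<rho> (\<lambda>q. snd (snd q))" using C2[of "\<lambda>_. 1"] one2 by simp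
        show "integrable \<rho> (\<lambda>q. snd (fst q))" using D2[of "\<lambda>_. 1"] one2 by simp
        show "(\<lambda>q. snd (fst q)) \<in> borel_measurable (vimage_algebra (space \<rho>) fst borel)"
          using measurable_compose[OF fF meas_snd_pp] .
      qed
      show ?thesis unfolding Gamma_mart_def using P2\<rho> d\<rho> c1 c2 by simp
    qed

    define Z where "Z = (\<integral>x. z1 x * z2 x \<partial>\<mu>)"
    have cost\<rho>: "total_cost \<rho> = V - Z"
    proof -
      have A1: "integrable \<rho> (\<lambda>q. fst (fst q) * snd (fst q))" "(\<integral>q. fst (fst q) * snd (fst q) \<partial>\<rho>) = Z"
        using D2[OF meas_fst_pp zfst2(1)] Z_def by (auto simp: z_def)
      have A2: "integrable \<rho> (\<lambda>q. fst (fst q) * snd (snd q))" "(\<integral>q. fst (fst q) * snd (snd q) \<partial>\<rho>) = Z"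
        using C2[OF meas_fst_pp zfst2(1)] Z_def by (auto simp: z_def)
      have A3: "integrable \<rho> (\<lambda>q. snd (fst q) * fst (snd q))" "(\<integral>q. snd (fst q) * fst (snd q) \<partial>\<rho>) = Z"
        using C1[OF meas_snd_pp zfst2(2)] Z_def by (auto simp: z_def mult.commute)
      have A4: "integrable \<rho> (\<lambda>q. fst (snd q) * snd (snd q))" "(\<integral>q. fst (snd q) * snd (snd q) \<partial>\<rho>) = V"
        using Y[OF mV iV] V_def by auto
      show ?thesis using cost_split[OF A1(1) A2(1) A3(1) A4(1)] A1(2) A2(2) A3(2) A4(2) by simp
    qed
    have "total_cost \<gamma> \<le> total_cost \<rho>" using assms(3) \<rho>mart by blast
    then have Za: "Z \<le> a" using cost\<gamma> cost\<rho> by simp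
    have ex: "z1 x * z2 x = (1-t)^2 * (fst x * snd x) + (t*(1-t)) * (fst x * h2 x) + (t*(1-t)) * (h1 x * snd x) + t^2 * (h1 x * h2 x)" for x
      by (simp add: z1_def z2_def power2_eq_square algebra_simps)
    have "Z = (1-t)^2 * a + (t*(1-t)) * b + (t*(1-t)) * c + t^2 * e"
      unfolding Z_def ex a_def b_def c_def e_def using i12 i1h2 ih12 ihh by simp
    then show ?thesis using Za by (simp add: algebra_simps)
  qed
  have "b + c \<le> 2 * a" by (rule small_t[OF key])
  then show "total_cost \<gamma> \<le> total_cost \<pi>" using cost\<gamma> cost\<pi> by simp
qed

end
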